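(* For every integer $n\ge1$, $$\sum_{\substack{1\le k\le n\\ \gcd(k,n)\text{ a square}}}k=\frac{n(\beta(n)+\chi(n))}{2},\qquad \prod_{\substack{1\le k\le n\\ \gcd(k,n)\text{ a square}}}k=n^{\beta(n)}\prod_{d\mid n}\left(\frac{d!}{d^d}\right)^{\lambda(n/d)}.$$
   Context: $\chi$ is the characteristic function of the set of perfect squares (with $1$ a square). $\lambda$ is the Liouville function, $\beta(n)=\sum_{d\mid n}d\,\lambda(n/d)$. *)

theory Defs
  imports "HOL-Computational_Algebra.Computational_Algebra"
begin

definition liouville :: "nat \<Rightarrow> int" where
  "liouville n = (-1) ^ size (prime_factorization n)"

definition beta :: "nat \<Rightarrow> int" where
  "beta n = (\<Sum>d | d dvd n. int d * liouville (n div d))"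

definition is_square :: "nat \<Rightarrow> bool" where
  "is_square m \<longleftrightarrow> (\<exists>j. m = j ^ 2)"

definition chi :: "nat \<Rightarrow> int" where
  "chi m = (if is_square m then 1 else 0)"

end

theory Submission
  imports Defs
begin

lemma gcd_split: "coprime (a::nat) b \<Longrightarrow> d dvd a * b \<Longrightarrow> d = gcd d a * gcd d b"
proof -
  assume c: "coprime a b" and d: "d dvd a * b"
  have c2: "coprime (gcd d a) (gcd d b)" using c coprime_divisors by blast
  have 1: "gcd d a * gcd d b dvd d" by (rule divides_mult[OF _ _ c2]) auto
  obtain d1 d2 where "d = d1 * d2" "d1 dvd a" "d2 dvd b" using division_decomp[OF d] by blast
  then have 2: "d dvd gcd d a * gcd d b" by (simp add: mult_dvd_mono)
  show ?thesis using 1 2 by (simp add: dvd_antisym)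
qed

lemma gcd_left: "coprime (a::nat) b \<Longrightarrow> x dvd a \<Longrightarrow> y dvd b \<Longrightarrow> gcd (x*y) a = x"
  by (metis coprime_divisors dvd_refl gcd_mult_left_right_cancel gcd_nat.orderE)

lemma gcd_right: "coprime (a::nat) b \<Longrightarrow> x dvd a \<Longrightarrow> y dvd b \<Longrightarrow> gcd (x*y) b = y"
  by (metis gcd_left coprime_commute mult.commute)

lemma divsum_mult:
  fixes g :: "nat \<Rightarrow> 'a::comm_monoid_add"
  assumes cop: "coprime a b" and a: "a > 0" and b: "b > 0"
  shows "(\<Sum>d | d dvd a * b. g d) = (\<Sum>x | x dvd a. \<Sum>y | y dvd b. g (x * y))"
proof -
  have fa: "finite {x. x dvd a}" using a by simp
  have fb: "finite {y. y dvd b}" using b by simp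
  have "(\<Sum>x | x dvd a. \<Sum>y | y dvd b. g (x * y)) = (\<Sum>p \<in> {x. x dvd a} \<times> {y. y dvd b}. g (fst p * snd p))"
    by (simp add: sum.cartesian_product case_prod_unfold)
  also have "\<dots> = (\<Sum>d | d dvd a * b. g d)"
  proof (rule sum.reindex_bij_witness[where j = "\<lambda>p. fst p * snd p" and i = "\<lambda>d. (gcd d a, gcd d b)"])
    fix p assume "p \<in> {x. x dvd a} \<times> {y. y dvd b}"
    then show "(gcd (fst p * snd p) a, gcd (fst p * snd p) b) = p"
      using gcd_left[OF cop] gcd_right[OF cop] by (cases p) auto
  next
    fix p assume "p \<in> {x. x dvd a} \<times> {y. y dvd b}"
    then show "fst p * snd p \<in> {d. d dvd a * b}" by (auto intro: mult_dvd_mono)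
  next
    fix d assume "d \<in> {d. d dvd a * b}"
    then show "fst (gcd d a, gcd d b) * snd (gcd d a, gcd d b) = d"
      using gcd_split[OF cop] by auto
  next
    fix d assume "d \<in> {d. d dvd a * b}"
    then show "(gcd d a, gcd d b) \<in> {x. x dvd a} \<times> {y. y dvd b}" by auto
  qed auto
  finally show ?thesis by simp
qed

lemma liouville_mult: "x > 0 \<Longrightarrow> y > 0 \<Longrightarrow> liouville (x * y) = liouville x * liouville y"
  by (simp add: liouville_def prime_factorization_mult power_add)

lemma liouville_pp: "prime p \<Longrightarrow> liouville (p ^ i) = (-1) ^ i"
  by (simp add: liouville_def prime_factorization_prime_power)

lemma sq_iff: "is_square m \<longleftrightarrow> is_nth_power 2 m"
  unfolding is_square_def is_nth_power_def by (rule refl)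

lemma altsum: "(\<Sum>i\<le>a. (-1::int) ^ i) = (if even a then 1 else 0)"
  by (induction a) auto

lemma lsum_pp:
  assumes p: "prime (p::nat)"
  shows "(\<Sum>d | d dvd p ^ a. liouville d) = chi (p ^ a)"
proof -
  have "{d. d dvd p ^ a} = (\<lambda>i. p ^ i) ` {..a}"
    using divides_primepow_nat[OF p] by auto
  moreover have "inj_on (\<lambda>i. p ^ i) {..a}"
    using p prime_gt_1_nat by (auto intro: inj_onI simp: power_inject_exp)
  ultimately have "(\<Sum>d | d dvd p ^ a. liouville d) = (\<Sum>i\<le>a. liouville (p ^ i))"
    by (simp add: sum.reindex)
  also have "\<dots> = (\<Sum>i\<le>a. (-1) ^ i)" using liouville_pp[OF p] by simp
  also have "\<dots> = chi (p ^ a)"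
    by (simp add: altsum chi_def sq_iff is_nth_power_prime_power_nat_iff[OF p])
  finally show ?thesis .
qed

lemma lsum: "m > 0 \<Longrightarrow> (\<Sum>d | d dvd m. liouville d) = chi m"
proof (induction m rule: less_induct)
  case (less m)
  show ?case
  proof (cases "m = 1")
    case True
    then show ?thesis by (simp add: chi_def sq_iff liouville_def)
  next
    case False
    then obtain p where p: "prime p" "p dvd m" using less.prems
      by (metis prime_factor_nat)
    define a where "a = multiplicity p m"
    define r where "r = m div p ^ a"
    have pa: "p ^ a dvd m" unfolding a_def by (rule multiplicity_dvd)
    have m: "m = p ^ a * r" unfolding r_def using pa by simp
    have a1: "a \<ge> 1" unfolding a_def using p less.prems
      by (simp add: prime_multiplicity_gt_zero_iff Suc_le_eq)
    have r0: "r > 0" using less.prems m by (cases "r = 0") auto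
    have ndvd: "\<not> p dvd r"
    proof
      assume "p dvd r"
      then have "p ^ Suc a dvd m" using m by auto
      then show False unfolding a_def using p less.prems
        by (metis Suc_n_not_le_n multiplicity_geI neq0_conv not_prime_unit prime_imp_prime_elem)
    qed
    have cop: "coprime (p ^ a) r" using ndvd p
      by (simp add: prime_imp_coprime coprime_commute)
    have rlt: "r < m"
    proof -
      have "p ^ a > 1" using a1 p(1) prime_gt_1_nat[OF p(1)] by (intro one_less_power) auto
      then show ?thesis using m r0 by simp
    qed
    have "(\<Sum>d | d dvd m. liouville d) = (\<Sum>x | x dvd p ^ a. \<Sum>y | y dvd r. liouville (x * y))"
      using divsum_mult[OF cop _ r0] p m by (simp add: prime_gt_0_nat)
    also have "\<dots> = (\<Sum>x | x dvd p ^ a. liouville x * (\<Sum>y | y dvd r. liouville y))"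
      unfolding sum_distrib_left
    proof (intro sum.cong refl)
      fix x y assume "x \<in> {x. x dvd p ^ a}" "y \<in> {y. y dvd r}"
      then have "x > 0" "y > 0" using r0 p by (auto intro: dvd_pos_nat simp: prime_gt_0_nat dvd_pos_nat[of "p ^ a" x])
      then show "liouville (x * y) = liouville x * liouville y" by (rule liouville_mult)
    qed
    also have "\<dots> = chi (p ^ a) * chi r"
      by (simp add: sum_distrib_right[symmetric] lsum_pp[OF p(1)] less.IH[OF rlt r0])
    also have "\<dots> = chi m"
      by (simp add: m chi_def sq_iff is_nth_power_mult_coprime_nat_iff[OF cop])
    finally show ?thesis .
  qed
qed

lemma mults_image:
  fixes e n :: nat
  assumes "e dvd n" "n > 0"
  shows "{k \<in> {1..n}. e dvd k} = (\<lambda>j. e * j) ` {1..n div e}"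
proof -
  have e0: "e > 0" using assms by (cases "e = 0") auto
  show ?thesis
  proof (intro equalityI subsetI)
    fix k assume "k \<in> {k \<in> {1..n}. e dvd k}"
    then obtain j where k: "k = e * j" "1 \<le> k" "k \<le> n" by (auto elim!: dvdE)
    then have "j \<ge> 1" by (cases j) auto
    moreover have "j \<le> n div e" using k e0 assms(1)
      by (metis div_le_mono nonzero_mult_div_cancel_left not_gr0)
    ultimately show "k \<in> (\<lambda>j. e * j) ` {1..n div e}" using k by auto
  next
    fix k assume "k \<in> (\<lambda>j. e * j) ` {1..n div e}"
    then obtain j where j: "k = e * j" "1 \<le> j" "j \<le> n div e" by (elim imageE) auto
    have "e * j \<le> e * (n div e)" using j by simp
    also have "\<dots> = n" using assms(1) by simp
    finally show "k \<in> {k \<in> {1..n}. e dvd k}" using j e0 by auto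
  qed
qed

lemma swap:
  fixes f :: "nat \<Rightarrow> real"
  assumes n: "n > 0"
  shows "(\<Sum>k | 1 \<le> k \<and> k \<le> n \<and> is_square (gcd k n). f k)
       = (\<Sum>e | e dvd n. of_int (liouville e) * (\<Sum>j=1..n div e. f (e * j)))"
proof -
  have "{k. 1 \<le> k \<and> k \<le> n \<and> is_square (gcd k n)} = {k \<in> {1..n}. is_square (gcd k n)}" by auto
  then have "(\<Sum>k | 1 \<le> k \<and> k \<le> n \<and> is_square (gcd k n). f k)
      = (\<Sum>k\<in>{1..n}. if is_square (gcd k n) then f k else 0)"
    by (simp only: sum.inter_filter[OF finite_atLeastAtMost])
  also have "\<dots> = (\<Sum>k\<in>{1..n}. of_int (chi (gcd k n)) * f k)"
    by (intro sum.cong refl) (simp add: chi_def)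
  also have "\<dots> = (\<Sum>k\<in>{1..n}. \<Sum>e | e dvd n. if e dvd k then of_int (liouville e) * f k else 0)"
  proof (intro sum.cong refl)
    fix k assume k: "k \<in> {1..n}"
    have "chi (gcd k n) = (\<Sum>d | d dvd gcd k n. liouville d)" using n lsum[of "gcd k n"] by simp
    also have "\<dots> = (\<Sum>d \<in> {e. e dvd n}. if d dvd k then liouville d else 0)"
      using n by (subst sum.inter_filter[symmetric]) (auto intro!: sum.cong)
    finally have "of_int (chi (gcd k n)) * f k = (\<Sum>d \<in> {e. e dvd n}. if d dvd k then of_int (liouville d) else 0) * f k"
      by (simp add: of_int_sum if_distrib cong: if_cong)
    also have "\<dots> = (\<Sum>e | e dvd n. if e dvd k then of_int (liouville e) * f k else 0)"
      unfolding sum_distrib_right by (intro sum.cong refl) simp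
    finally show "of_int (chi (gcd k n)) * f k = (\<Sum>e | e dvd n. if e dvd k then of_int (liouville e) * f k else 0)" .
  qed
  also have "\<dots> = (\<Sum>e | e dvd n. \<Sum>k\<in>{1..n}. if e dvd k then of_int (liouville e) * f k else 0)"
    by (rule sum.swap)
  also have "\<dots> = (\<Sum>e | e dvd n. of_int (liouville e) * (\<Sum>j=1..n div e. f (e * j)))"
  proof (intro sum.cong refl)
    fix e assume e: "e \<in> {e. e dvd n}"
    then have e0: "e > 0" using n by (cases "e = 0") auto
    have "(\<Sum>k\<in>{1..n}. if e dvd k then of_int (liouville e) * f k else 0)
        = of_int (liouville e) * (\<Sum>k\<in>{k \<in> {1..n}. e dvd k}. f k)"
      by (simp only: sum_distrib_left sum.inter_filter[OF finite_atLeastAtMost] mult_zero_right if_distrib)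
    also have "(\<Sum>k\<in>{k \<in> {1..n}. e dvd k}. f k) = (\<Sum>j=1..n div e. f (e * j))"
    proof -
      have inj: "inj_on (\<lambda>j. e * j) {1..n div e}" using e0 by (simp add: inj_on_def)
      have ed: "e dvd n" using e by simp
      show ?thesis unfolding mults_image[OF ed n] sum.reindex[OF inj] o_def ..
    qed
    finally show "(\<Sum>k\<in>{1..n}. if e dvd k then of_int (liouville e) * f k else 0)
        = of_int (liouville e) * (\<Sum>j=1..n div e. f (e * j))" .
  qed
  finally show ?thesis .
qed

lemma div_reindex:
  fixes n :: nat and g :: "nat \<Rightarrow> 'a::comm_monoid_add"
  assumes n: "n > 0"
  shows "(\<Sum>e | e dvd n. g e) = (\<Sum>d | d dvd n. g (n div d))"
proof (rule sum.reindex_bij_witness[where i = "\<lambda>e. n div e" and j = "\<lambda>d. n div d"])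
  fix d assume "d \<in> {d. d dvd n}"
  then show "n div (n div d) = d" using n by (simp add: div_div_eq_right)
next
  fix d assume "d \<in> {d. d dvd n}"
  then show "n div d \<in> {e. e dvd n}" by (auto intro: div_dvd_div[of d n n, simplified])
next
  fix d assume "d \<in> {d. d dvd n}"
  then show "n div (n div d) = d" using n by (simp add: div_div_eq_right)
next
  fix d assume "d \<in> {d. d dvd n}"
  then show "n div d \<in> {e. e dvd n}" by (auto intro: div_dvd_div[of d n n, simplified])
qed (use n in \<open>simp add: div_div_eq_right\<close>)

lemma div_div_self: "(d::nat) dvd n \<Longrightarrow> n > 0 \<Longrightarrow> n div (n div d) = d"
  by (simp add: div_div_eq_right)

lemma gauss_real: "(\<Sum>j=1..N. real j) = real N * (real N + 1) / 2"
  by (induction N) (auto simp: field_simps)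

lemma sum_part:
  fixes n :: nat
  assumes n: "n > 0"
  shows "real (\<Sum>k | 1 \<le> k \<and> k \<le> n \<and> is_square (gcd k n). k)
           = real n * real_of_int (beta n + chi n) / 2"
proof -
  have "real (\<Sum>k | 1 \<le> k \<and> k \<le> n \<and> is_square (gcd k n). k)
      = (\<Sum>k | 1 \<le> k \<and> k \<le> n \<and> is_square (gcd k n). real k)" by simp
  also have "\<dots> = (\<Sum>e | e dvd n. of_int (liouville e) * (\<Sum>j=1..n div e. real (e * j)))"
    by (rule swap[OF n])
  also have "\<dots> = (\<Sum>e | e dvd n. of_int (liouville e) * (real n * (real (n div e) + 1) / 2))"
  proof (intro sum.cong refl)
    fix e assume "e \<in> {e. e dvd n}"
    then have en: "real e * real (n div e) = real n"
      by (metis mem_Collect_eq dvd_mult_div_cancel of_nat_mult)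
    have "(\<Sum>j=1..n div e. real (e * j)) = real e * (\<Sum>j=1..n div e. real j)"
      by (simp add: sum_distrib_left)
    also have "\<dots> = real n * (real (n div e) + 1) / 2"
      unfolding gauss_real by (simp add: en[symmetric] field_simps)
    finally show "of_int (liouville e) * (\<Sum>j=1..n div e. real (e * j)) = of_int (liouville e) * (real n * (real (n div e) + 1) / 2)"
      by simp
  qed
  also have "\<dots> = real n / 2 * ((\<Sum>e | e dvd n. real (n div e) * of_int (liouville e)) + (\<Sum>e | e dvd n. of_int (liouville e)))"
    by (simp add: sum_distrib_left sum.distrib[symmetric] field_simps)
  also have "(\<Sum>e | e dvd n. real (n div e) * of_int (liouville e)) = real_of_int (beta n)"
    unfolding beta_def of_int_sum using div_reindex[OF n, of "\<lambda>e. real (n div e) * of_int (liouville e)"] n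
    by (simp add: div_div_eq_right)
  also have "(\<Sum>e | e dvd n. real_of_int (liouville e)) = real_of_int (chi n)"
    using lsum[OF n] by (metis of_int_sum)
  finally show ?thesis by simp
qed

lemma ln_powi: "x > 0 \<Longrightarrow> ln (x powi k) = real_of_int k * ln (x::real)"
  by (metis less_imp_le ln_powr powr_real_of_int' less_irrefl)

lemma ln_fact_sum: "ln (fact N :: real) = (\<Sum>j=1..N. ln (real j))"
  unfolding fact_prod of_nat_prod by (subst ln_prod) auto

lemma prod_part:
  fixes n :: nat
  assumes n: "n > 0"
  shows "real (\<Prod>k | 1 \<le> k \<and> k \<le> n \<and> is_square (gcd k n). k)
           = real n powi beta n *
             (\<Prod>d | d dvd n. (fact d / real d ^ d) powi liouville (n div d))"
proof -
  let ?S = "{k. 1 \<le> k \<and> k \<le> n \<and> is_square (gcd k n)}"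
  have finS: "finite ?S" by (rule finite_subset[of _ "{..n}"]) auto
  have finD: "finite {d. d dvd n}" using n by simp
  have posD: "\<And>d. d \<in> {d. d dvd n} \<Longrightarrow> d > 0" using n by (auto intro: dvd_pos_nat)
  have Lpos: "real (\<Prod>k\<in>?S. k) > 0" using finS by (auto intro: prod_pos)
  have qpos: "\<And>d. d \<in> {d. d dvd n} \<Longrightarrow> (fact d / real d ^ d :: real) > 0"
    using posD by auto
  have Rpos: "real n powi beta n * (\<Prod>d | d dvd n. (fact d / real d ^ d) powi liouville (n div d)) > 0"
    using n qpos by (intro mult_pos_pos zero_less_power_int prod_pos) auto
  have "ln (real (\<Prod>k\<in>?S. k)) = (\<Sum>k\<in>?S. ln (real k))"
    unfolding of_nat_prod by (subst ln_prod) (use finS in auto)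
  also have "\<dots> = (\<Sum>e | e dvd n. of_int (liouville e) * (\<Sum>j=1..n div e. ln (real (e * j))))"
    by (rule swap[OF n])
  also have "\<dots> = (\<Sum>e | e dvd n. of_int (liouville e) * (real (n div e) * ln (real e) + ln (fact (n div e))))"
  proof (intro sum.cong refl)
    fix e assume "e \<in> {e. e dvd n}"
    then have e0: "e > 0" using posD by auto
    have "(\<Sum>j=1..n div e. ln (real (e * j))) = (\<Sum>j=1..n div e. ln (real e) + ln (real j))"
      by (intro sum.cong refl) (use e0 in \<open>auto simp: ln_mult\<close>)
    also have "\<dots> = real (n div e) * ln (real e) + ln (fact (n div e))"
      by (simp add: sum.distrib ln_fact_sum)
    finally show "of_int (liouville e) * (\<Sum>j=1..n div e. ln (real (e * j))) = of_int (liouville e) * (real (n div e) * ln (real e) + ln (fact (n div e)))"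
      by simp
  qed
  also have "\<dots> = (\<Sum>d | d dvd n. of_int (liouville (n div d)) * (real d * ln (real (n div d)) + ln (fact d)))"
    by (subst div_reindex[OF n]) (auto intro!: sum.cong simp: div_div_self n)
  also have "\<dots> = (\<Sum>d | d dvd n. real d * of_int (liouville (n div d)) * ln (real n)
                 + of_int (liouville (n div d)) * ln (fact d / real d ^ d))"
  proof (intro sum.cong refl)
    fix d assume d: "d \<in> {d. d dvd n}"
    then have d0: "d > 0" using posD by auto
    have "real (n div d) = real n / real d" using d by (simp add: real_of_nat_div)
    then have h1: "ln (real (n div d)) = ln (real n) - ln (real d)" using n d0 by (simp add: ln_div)
    have h2: "ln (fact d / real d ^ d) = ln (fact d) - real d * ln (real d)"
      using d0 by (simp add: ln_div ln_realpow)
    show "of_int (liouville (n div d)) * (real d * ln (real (n div d)) + ln (fact d)) =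
         real d * of_int (liouville (n div d)) * ln (real n) + of_int (liouville (n div d)) * ln (fact d / real d ^ d)"
      unfolding h1 h2 by (simp add: algebra_simps)
  qed
  also have "\<dots> = real_of_int (beta n) * ln (real n) + (\<Sum>d | d dvd n. of_int (liouville (n div d)) * ln (fact d / real d ^ d))"
    by (simp add: sum.distrib beta_def of_int_sum sum_distrib_right)
  also have "\<dots> = ln (real n powi beta n * (\<Prod>d | d dvd n. (fact d / real d ^ d) powi liouville (n div d)))"
  proof -
    have "ln (\<Prod>d | d dvd n. (fact d / real d ^ d) powi liouville (n div d))
        = (\<Sum>d | d dvd n. ln ((fact d / real d ^ d) powi liouville (n div d)))"
      using qpos finD by (subst ln_prod) (auto intro: zero_less_power_int[THEN less_imp_neq, symmetric])
    also have "\<dots> = (\<Sum>d | d dvd n. of_int (liouville (n div d)) * ln (fact d / real d ^ d))"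
      using qpos by (intro sum.cong refl) (simp add: ln_powi)
    finally show ?thesis
      using n qpos finD
      by (simp add: ln_mult zero_less_power_int prod_pos ln_powi)
  qed
  finally have "ln (real (\<Prod>k\<in>?S. k)) = ln (real n powi beta n * (\<Prod>d | d dvd n. (fact d / real d ^ d) powi liouville (n div d)))" .
  then show ?thesis using Lpos Rpos by (simp add: ln_inj_iff)
qed

theorem mainTheorem11:
  fixes n :: nat
  assumes "n \<ge> 1"
  shows "real (\<Sum>k | 1 \<le> k \<and> k \<le> n \<and> is_square (gcd k n). k)
           = real n * real_of_int (beta n + chi n) / 2
         \<and> real (\<Prod>k | 1 \<le> k \<and> k \<le> n \<and> is_square (gcd k n). k)
           = real n powi beta n *
             (\<Prod>d | d dvd n. (fact d / real d ^ d) powi liouville (n div d))"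
  using assms sum_part prod_part by simp

end
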